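(* Let $G$ be a simple graph, let $k\ge 1$, let $M$ be a maximal $k$-edge-colorable subgraph of $G$ (maximal with respect to inclusion of edge sets), and let $F$ be the set of vertices $v$ with $d_M(v) < k$. Then the induced subgraph $G[F]$ has maximum degree at most $k-1$.
   Context: $d_M(v)$ denotes the number of edges of $M$ incident to $v$. A graph is $k$-edge-colorable if its edges can be colored with $k$ colors so that adjacent edges receive distinct colors. *)

theory Defs
  imports Main
begin

definition simple_graph :: "'a set \<Rightarrow> 'a set set \<Rightarrow> bool" where
  "simple_graph V E \<longleftrightarrow> finite V \<and> (\<forall>e\<in>E. e \<subseteq> V \<and> card e = 2)"

definition deg :: "'a set set \<Rightarrow> 'a \<Rightarrow> nat" where
  "deg M v = card {e\<in>M. v \<in> e}"

definition edge_colorable :: "nat \<Rightarrow> 'a set set \<Rightarrow> bool" where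
  "edge_colorable k M \<longleftrightarrow> (\<exists>c :: 'a set \<Rightarrow> nat.
      (\<forall>e\<in>M. c e < k) \<and>
      (\<forall>e\<in>M. \<forall>e'\<in>M. e \<noteq> e' \<and> e \<inter> e' \<noteq> {} \<longrightarrow> c e \<noteq> c e'))"

definition maximal_edge_colorable :: "nat \<Rightarrow> 'a set set \<Rightarrow> 'a set set \<Rightarrow> bool" where
  "maximal_edge_colorable k E M \<longleftrightarrow> M \<subseteq> E \<and> edge_colorable k M \<and>
      (\<forall>M'. M \<subseteq> M' \<and> M' \<subseteq> E \<and> edge_colorable k M' \<longrightarrow> M' = M)"

definition induced_edges :: "'a set set \<Rightarrow> 'a set \<Rightarrow> 'a set set" where
  "induced_edges E F = {e\<in>E. e \<subseteq> F}"

end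

theory Submission
  imports Defs
begin


lemma iso_conn:
  assumes "finite K" "card {e\<in>K. a\<in>e} = 0" "(\<lambda>s t. {s,t}\<in>K)\<^sup>*\<^sup>* a b"
  shows "b = a"
  using assms(3)
proof (cases rule: converse_rtranclpE)
  case base then show ?thesis by simp
next
  case (step z)
  then have "{a,z} \<in> {e\<in>K. a\<in>e}" by simp
  moreover have "finite {e\<in>K. a\<in>e}" using assms(1) by simp
  ultimately have "card {e\<in>K. a\<in>e} \<noteq> 0" by (metis card_0_eq empty_iff)
  with assms(2) show ?thesis by simp
qed

lemma three_end:
  assumes "finite K" "\<forall>e\<in>K. card e = 2" "\<forall>z. card {e\<in>K. z\<in>e} \<le> 2"
    "card {e\<in>K. a\<in>e} \<le> 1" "card {e\<in>K. b\<in>e} \<le> 1" "card {e\<in>K. d\<in>e} \<le> 1"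
    "a\<noteq>b" "a\<noteq>d" "b\<noteq>d" "(\<lambda>s t. {s,t}\<in>K)\<^sup>*\<^sup>* a b" "(\<lambda>s t. {s,t}\<in>K)\<^sup>*\<^sup>* a d"
  shows False
  using assms
proof (induction "card K" arbitrary: K a b d rule: less_induct)
  case less
  note L = less.prems
  show False
  proof (cases "card {e\<in>K. a\<in>e} = 0")
    case True
    then show False using iso_conn[OF L(1) True L(10)] L(7) by simp
  next
    case False
    then have "card {e\<in>K. a\<in>e} = 1" using L(4) by simp
    then obtain e0 where e0: "{e\<in>K. a\<in>e} = {e0}" by (meson card_1_singletonE)
    then have e0K: "e0 \<in> K" "a \<in> e0" by auto
    then have "card e0 = 2" using L(2) by auto
    then obtain p q where pq: "e0 = {p,q}" "p \<noteq> q" by (meson card_2_iff)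
    obtain a' where a': "e0 = {a,a'}" "a' \<noteq> a"
    proof (cases "a = p")
      case True then show ?thesis using that pq by blast
    next
      case False then have "a = q" using pq e0K(2) by blast
      then show ?thesis using that pq by (metis insert_commute)
    qed
    have uniq: "\<And>z. {a,z} \<in> K \<Longrightarrow> z = a'"
    proof -
      fix z assume "{a,z} \<in> K"
      then have "{a,z} \<in> {e\<in>K. a\<in>e}" by simp
      then have "{a,z} = e0" using e0 by simp
      then show "z = a'" using a' by (auto simp: doubleton_eq_iff)
    qed
    define K' where "K' = K - {e0}"
    have cardK': "card K' < card K" unfolding K'_def using e0K(1) L(1) by (rule card_Diff1_less[rotated])
    have C: "\<And>s t. (\<lambda>s t. {s,t}\<in>K)\<^sup>*\<^sup>* s t \<Longrightarrow> s \<noteq> a \<Longrightarrow>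
          (t = a \<longrightarrow> (\<lambda>s t. {s,t}\<in>K')\<^sup>*\<^sup>* s a') \<and> (t \<noteq> a \<longrightarrow> (\<lambda>s t. {s,t}\<in>K')\<^sup>*\<^sup>* s t)"
    proof -
      fix s t assume "(\<lambda>s t. {s,t}\<in>K)\<^sup>*\<^sup>* s t" "s \<noteq> a"
      then show "(t = a \<longrightarrow> (\<lambda>s t. {s,t}\<in>K')\<^sup>*\<^sup>* s a') \<and> (t \<noteq> a \<longrightarrow> (\<lambda>s t. {s,t}\<in>K')\<^sup>*\<^sup>* s t)"
      proof (induction rule: rtranclp_induct)
        case base then show ?case by simp
      next
        case (step t0 t)
        show ?case
        proof (cases "t0 = a")
          case True
          then have "t = a'" using step(2) uniq by blast
          then show ?thesis using step True a'(2) by simp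
        next
          case False
          then have IH: "(\<lambda>s t. {s,t}\<in>K')\<^sup>*\<^sup>* s t0" using step by simp
          show ?thesis
          proof (cases "t = a")
            case True
            then have "{a,t0} \<in> K" using step(2) by (simp add: insert_commute)
            then have "t0 = a'" by (rule uniq)
            then show ?thesis using IH True by simp
          next
            case False
            have "{t0,t} \<noteq> e0" using a' False \<open>t0 \<noteq> a\<close> by auto
            then have "{t0,t} \<in> K'" using step(2) unfolding K'_def by simp
            then show ?thesis using IH False by (meson rtranclp.rtrancl_into_rtrancl)
          qed
        qed
      qed
    qed
    have fromA: "\<And>b. (\<lambda>s t. {s,t}\<in>K)\<^sup>*\<^sup>* a b \<Longrightarrow> b \<noteq> a \<Longrightarrow> (\<lambda>s t. {s,t}\<in>K')\<^sup>*\<^sup>* a' b"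
    proof -
      fix b assume h: "(\<lambda>s t. {s,t}\<in>K)\<^sup>*\<^sup>* a b" "b \<noteq> a"
      from h(1) show "(\<lambda>s t. {s,t}\<in>K')\<^sup>*\<^sup>* a' b"
      proof (cases rule: converse_rtranclpE)
        case base then show ?thesis using h(2) by simp
      next
        case (step z)
        then have "z = a'" by (intro uniq) simp
        then show ?thesis using C[of a' b] step h(2) a'(2) by simp
      qed
    qed
    have cb: "(\<lambda>s t. {s,t}\<in>K')\<^sup>*\<^sup>* a' b" using fromA L(10) L(7) by simp
    have cd: "(\<lambda>s t. {s,t}\<in>K')\<^sup>*\<^sup>* a' d" using fromA L(11) L(8) by simp
    have finK': "finite K'" using L(1) K'_def by simp
    have degle: "\<And>z. card {e\<in>K'. z\<in>e} \<le> card {e\<in>K. z\<in>e}"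
      using L(1) unfolding K'_def by (intro card_mono) auto
    have dega': "\<And>z. z \<in> e0 \<Longrightarrow> card {e\<in>K'. z\<in>e} = card {e\<in>K. z\<in>e} - 1"
    proof -
      fix z assume "z \<in> e0"
      have "{e\<in>K'. z\<in>e} = {e\<in>K. z\<in>e} - {e0}" unfolding K'_def by auto
      then show "card {e\<in>K'. z\<in>e} = card {e\<in>K. z\<in>e} - 1"
        using \<open>z\<in>e0\<close> e0K(1) L(1) by simp
    qed
    have a'e0: "a' \<in> e0" using a' by simp
    show False
    proof (cases "a' = b \<or> a' = d")
      case True
      then show False
      proof
        assume "a' = b"
        then have "card {e\<in>K'. b\<in>e} = 0" using dega'[OF a'e0] L(5) by simp
        then have "card {e\<in>K'. a'\<in>e} = 0" using \<open>a' = b\<close> by simp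
        then have "d = a'" by (rule iso_conn[OF finK' _ cd])
        then have "d = b" using \<open>a' = b\<close> by simp
        then show False using L(9) by simp
      next
        assume "a' = d"
        then have "card {e\<in>K'. d\<in>e} = 0" using dega'[OF a'e0] L(6) by simp
        then have "card {e\<in>K'. a'\<in>e} = 0" using \<open>a' = d\<close> by simp
        then have "b = a'" by (rule iso_conn[OF finK' _ cb])
        then have "b = d" using \<open>a' = d\<close> by simp
        then show False using L(9) by simp
      qed
    next
      case False
      have H2: "\<forall>e\<in>K'. card e = 2" using L(2) unfolding K'_def by blast
      have H3: "\<forall>z. card {e\<in>K'. z\<in>e} \<le> 2"
      proof
        fix z show "card {e\<in>K'. z\<in>e} \<le> 2" using degle[of z] L(3)[rule_format, of z] by linarith
      qed
      have H4: "card {e\<in>K'. a'\<in>e} \<le> 1" using dega'[OF a'e0] L(3)[rule_format, of a'] by linarith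
      have H5: "card {e\<in>K'. b\<in>e} \<le> 1" using degle[of b] L(5) by linarith
      have H6: "card {e\<in>K'. d\<in>e} \<le> 1" using degle[of d] L(6) by linarith
      have n1: "a' \<noteq> b" using False by simp
      have n2: "a' \<noteq> d" using False by simp
      show False by (rule less.hyps[OF cardK' finK' H2 H3 H4 H5 H6 n1 n2 L(9) cb cd])
    qed
  qed
qed



locale kc =
  fixes M :: "'a set set" and k :: nat and v :: 'a and R :: "'a set"
  assumes finM: "finite M"
    and two: "\<And>e. e \<in> M \<Longrightarrow> card e = 2"
    and Rbad: "\<And>u. u \<in> R \<Longrightarrow> {v,u} \<notin> M \<and> u \<noteq> v \<and> \<not> edge_colorable k (insert {v,u} M)"
begin

definition pc :: "('a set \<Rightarrow> nat) \<Rightarrow> bool" where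
  "pc c \<longleftrightarrow> (\<forall>e\<in>M. c e < k) \<and> (\<forall>e\<in>M. \<forall>e'\<in>M. e \<noteq> e' \<and> e \<inter> e' \<noteq> {} \<longrightarrow> c e \<noteq> c e')"

definition miss :: "('a set \<Rightarrow> nat) \<Rightarrow> 'a \<Rightarrow> nat set" where
  "miss c z = {g. g < k \<and> (\<forall>e\<in>M. z \<in> e \<longrightarrow> c e \<noteq> g)}"

inductive fp :: "('a set \<Rightarrow> nat) \<Rightarrow> 'a list \<Rightarrow> bool" for c where
  root: "u \<in> R \<Longrightarrow> fp c [u]"
| step: "fp c P \<Longrightarrow> {v,x} \<in> M \<Longrightarrow> x \<notin> set P \<Longrightarrow> c {v,x} \<in> miss c (last P) \<Longrightarrow> fp c (P @ [x])"

lemma ne_v_edge: "{v,x} \<in> M \<Longrightarrow> x \<noteq> v"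
  using two by fastforce

lemma fp_ne: "fp c P \<Longrightarrow> P \<noteq> []"
  by (induction rule: fp.induct) auto

lemma fp_set_ne_v: "fp c P \<Longrightarrow> z \<in> set P \<Longrightarrow> z \<noteq> v"
  by (induction rule: fp.induct) (use Rbad ne_v_edge in auto)

lemma fp_set_sub: "fp c P \<Longrightarrow> z \<in> set P \<Longrightarrow> z \<in> R \<or> {v,z} \<in> M"
  by (induction rule: fp.induct) auto

lemma fp_snoc: "fp c (P @ [x]) \<Longrightarrow> (P = [] \<and> x \<in> R) \<or>
   (fp c P \<and> {v,x} \<in> M \<and> x \<notin> set P \<and> c {v,x} \<in> miss c (last P))"
  by (cases rule: fp.cases) auto

lemma fp_transfer:
  assumes "fp c P" "\<forall>w\<in>set P. c' {v,w} = c {v,w}" "\<forall>z\<in>set P. miss c' z = miss c z"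
  shows "fp c' P"
  using assms
proof (induction rule: fp.induct)
  case (root u) then show ?case by (simp add: fp.root)
next
  case (step P x)
  have "last P \<in> set P" using fp_ne[OF step(1)] by simp
  then show ?case using step by (auto intro!: fp.step)
qed

lemma fp_set: "fp c P \<Longrightarrow> z \<in> set P \<Longrightarrow> \<exists>Q. fp c Q \<and> last Q = z"
proof (induction rule: fp.induct)
  case (root u) then show ?case using fp.root by fastforce
next
  case (step P x) then show ?case using fp.step by fastforce
qed

lemma miss_lt: "g \<in> miss c z \<Longrightarrow> g < k" unfolding miss_def by simp

lemma miss_edge: "g \<in> miss c z \<Longrightarrow> e \<in> M \<Longrightarrow> z \<in> e \<Longrightarrow> c e \<noteq> g" unfolding miss_def by simp

lemma color_insert:
  assumes "pc c" "{v,u} \<notin> M" "a \<in> miss c v" "a \<in> miss c u"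
  shows "edge_colorable k (insert {v,u} M)"
proof -
  define c2 where "c2 = c({v,u} := a)"
  have "(\<forall>e\<in>insert {v,u} M. c2 e < k)"
    using assms(1,3) unfolding c2_def pc_def by (auto dest: miss_lt)
  moreover have "\<forall>e\<in>insert {v,u} M. \<forall>e'\<in>insert {v,u} M. e \<noteq> e' \<and> e \<inter> e' \<noteq> {} \<longrightarrow> c2 e \<noteq> c2 e'"
  proof (intro ballI impI)
    fix e e' assume h: "e \<in> insert {v,u} M" "e' \<in> insert {v,u} M" "e \<noteq> e' \<and> e \<inter> e' \<noteq> {}"
    show "c2 e \<noteq> c2 e'"
    proof (cases "e = {v,u}")
      case True
      then have "e' \<in> M" "e' \<noteq> {v,u}" using h by auto
      moreover have "v \<in> e' \<or> u \<in> e'" using h True by auto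
      ultimately show ?thesis using True assms(3,4) unfolding c2_def by (auto dest: miss_edge)
    next
      case False
      note F = False
      show ?thesis
      proof (cases "e' = {v,u}")
        case True
        then have "e \<in> M" using h F by auto
        moreover have "v \<in> e \<or> u \<in> e" using h True by auto
        ultimately show ?thesis using True F assms(3,4) unfolding c2_def by (auto dest: miss_edge)
      next
        case False
        then show ?thesis using F h assms(1) unfolding c2_def pc_def by auto
      qed
    qed
  qed
  ultimately show ?thesis unfolding edge_colorable_def by blast
qed

lemma miss_eq: "(\<forall>e\<in>M. z \<in> e \<longrightarrow> c' e = c e) \<Longrightarrow> miss c' z = miss c z"
  unfolding miss_def by auto

lemma doubleton_v: "x \<noteq> v \<Longrightarrow> {v,w} = {v,x} \<Longrightarrow> w = x"
  by (auto simp: doubleton_eq_iff)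

lemma shift:
  "fp c P \<Longrightarrow> pc c \<Longrightarrow> a \<in> miss c v \<Longrightarrow> a \<in> miss c (last P) \<Longrightarrow> False"
proof (induction P arbitrary: c a rule: rev_induct)
  case Nil then show ?case using fp_ne by blast
next
  case (snoc x P)
  from fp_snoc[OF snoc.prems(1)] show False
  proof
    assume h: "P = [] \<and> x \<in> R"
    then have nm: "{v,x} \<notin> M" using Rbad[of x] by simp
    have ax: "a \<in> miss c x" using snoc.prems(4) h by simp
    have "edge_colorable k (insert {v,x} M)"
      by (rule color_insert[OF snoc.prems(2) nm snoc.prems(3) ax])
    then show False using Rbad[of x] h by simp
  next
    assume h: "fp c P \<and> {v,x} \<in> M \<and> x \<notin> set P \<and> c {v,x} \<in> miss c (last P)"
    have xv: "x \<noteq> v" using h ne_v_edge by blast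
    have ax: "a \<in> miss c x" using snoc.prems(4) by simp
    define c1 where "c1 = c({v,x} := a)"
    define g where "g = c {v,x}"
    have pc1: "pc c1"
      unfolding pc_def
    proof (intro conjI ballI impI)
      fix e assume "e \<in> M" then show "c1 e < k"
        using snoc.prems(2,3) unfolding c1_def pc_def by (auto dest: miss_lt)
    next
      fix e e' assume h2: "e \<in> M" "e' \<in> M" "e \<noteq> e' \<and> e \<inter> e' \<noteq> {}"
      show "c1 e \<noteq> c1 e'"
      proof (cases "e = {v,x}")
        case True
        then have "v \<in> e' \<or> x \<in> e'" "e' \<noteq> {v,x}" using h2 by auto
        then show ?thesis using True h2 snoc.prems(3) ax unfolding c1_def by (auto dest: miss_edge)
      next
        case False
        note F = False
        show ?thesis
        proof (cases "e' = {v,x}")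
          case True
          then have "v \<in> e \<or> x \<in> e" using h2 by auto
          then show ?thesis using True F h2 snoc.prems(3) ax unfolding c1_def by (auto dest: miss_edge)
        next
          case False
          then show ?thesis using F h2 snoc.prems(2) unfolding c1_def pc_def by auto
        qed
      qed
    qed
    have fp1: "fp c1 P"
    proof (rule fp_transfer[of c])
      show "fp c P" using h by simp
      show "\<forall>w\<in>set P. c1 {v,w} = c {v,w}"
      proof
        fix w assume "w \<in> set P"
        then have "w \<noteq> x" using h by auto
        then have "{v,w} \<noteq> {v,x}" using doubleton_v[OF xv] by blast
        then show "c1 {v,w} = c {v,w}" unfolding c1_def by simp
      qed
      show "\<forall>z\<in>set P. miss c1 z = miss c z"
      proof
        fix z assume z: "z \<in> set P"
        then have "z \<noteq> x" "z \<noteq> v" using h fp_set_ne_v by auto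
        then show "miss c1 z = miss c z" unfolding c1_def by (intro miss_eq) auto
      qed
    qed
    have lastP: "last P \<in> set P" using fp_ne h by auto
    have gP: "g \<in> miss c1 (last P)"
    proof -
      have "last P \<noteq> x" "last P \<noteq> v" using lastP h fp_set_ne_v by auto
      then have "miss c1 (last P) = miss c (last P)" unfolding c1_def by (intro miss_eq) auto
      then show ?thesis using h g_def by simp
    qed
    have gv: "g \<in> miss c1 v"
      unfolding miss_def
    proof (intro CollectI conjI ballI impI)
      show "g < k" using gP miss_lt by blast
      fix e assume e: "e \<in> M" "v \<in> e"
      show "c1 e \<noteq> g"
      proof (cases "e = {v,x}")
        case True
        then show ?thesis unfolding c1_def g_def using miss_edge[OF snoc.prems(3)] h by auto
      next
        case False
        then have "c e \<noteq> c {v,x}" using snoc.prems(2) e h unfolding pc_def by auto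
        then show ?thesis using False unfolding c1_def g_def by simp
      qed
    qed
    show False using snoc.IH[OF fp1 pc1 gv gP] .
  qed
qed

definition Kc :: "('a set \<Rightarrow> nat) \<Rightarrow> nat \<Rightarrow> nat \<Rightarrow> 'a set set" where
  "Kc c a b = {e\<in>M. c e = a \<or> c e = b}"

definition cn :: "('a set \<Rightarrow> nat) \<Rightarrow> nat \<Rightarrow> nat \<Rightarrow> 'a \<Rightarrow> 'a \<Rightarrow> bool" where
  "cn c a b = (\<lambda>s t. {s,t} \<in> Kc c a b)\<^sup>*\<^sup>*"

definition swp :: "('a set \<Rightarrow> nat) \<Rightarrow> nat \<Rightarrow> nat \<Rightarrow> 'a \<Rightarrow> 'a set \<Rightarrow> nat" where
  "swp c a b y e = (if e \<in> Kc c a b \<and> (\<exists>z\<in>e. cn c a b y z) then (if c e = a then b else a) else c e)"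

lemma cn_sym: "cn c a b s t \<Longrightarrow> cn c a b t s"
  unfolding cn_def
proof (induction rule: rtranclp_induct)
  case base then show ?case by simp
next
  case (step t0 t)
  have "{t,t0} \<in> Kc c a b" using step(2) by (simp add: insert_commute)
  then show ?case using step(3) by (rule converse_rtranclp_into_rtranclp)
qed

lemma two_elems: "e \<in> M \<Longrightarrow> z \<in> e \<Longrightarrow> z' \<in> e \<Longrightarrow> z \<noteq> z' \<Longrightarrow> e = {z,z'}"
proof -
  assume h: "e \<in> M" "z \<in> e" "z' \<in> e" "z \<noteq> z'"
  then have "card e = 2" using two by simp
  then obtain p q where "e = {p,q}" "p \<noteq> q" by (meson card_2_iff)
  then show "e = {z,z'}" using h by auto
qed

lemma cn_edge: "cn c a b y z \<Longrightarrow> e \<in> Kc c a b \<Longrightarrow> z \<in> e \<Longrightarrow> z' \<in> e \<Longrightarrow> cn c a b y z'"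
proof -
  assume h: "cn c a b y z" "e \<in> Kc c a b" "z \<in> e" "z' \<in> e"
  show "cn c a b y z'"
  proof (cases "z = z'")
    case True then show ?thesis using h by simp
  next
    case False
    have "e \<in> M" using h(2) unfolding Kc_def by simp
    then have "e = {z,z'}" using two_elems h False by blast
    then have "{z,z'} \<in> Kc c a b" using h(2) by simp
    then show ?thesis using h(1) unfolding cn_def by (rule rtranclp.rtrancl_into_rtrancl[rotated])
  qed
qed

lemma swp_out: "\<not> cn c a b y z \<Longrightarrow> e \<in> M \<Longrightarrow> z \<in> e \<Longrightarrow> swp c a b y e = c e"
proof -
  assume h: "\<not> cn c a b y z" "e \<in> M" "z \<in> e"
  have "\<not> (e \<in> Kc c a b \<and> (\<exists>z'\<in>e. cn c a b y z'))"
  proof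
    assume "e \<in> Kc c a b \<and> (\<exists>z'\<in>e. cn c a b y z')"
    then obtain z' where "e \<in> Kc c a b" "z' \<in> e" "cn c a b y z'" by blast
    then have "cn c a b y z" using cn_edge h(3) by blast
    then show False using h(1) by simp
  qed
  then show ?thesis unfolding swp_def by (rule if_not_P)
qed

lemma miss_swp_out: "\<not> cn c a b y z \<Longrightarrow> miss (swp c a b y) z = miss c z"
  by (intro miss_eq) (auto intro: swp_out)

lemma miss_swp_in:
  assumes "cn c a b y z" "b \<in> miss c z" "a < k" "a \<noteq> b"
  shows "a \<in> miss (swp c a b y) z"
  unfolding miss_def
proof (intro CollectI conjI ballI impI)
  show "a < k" by fact
  fix e assume e: "e \<in> M" "z \<in> e"
  have cb: "c e \<noteq> b" using miss_edge[OF assms(2) e] .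
  show "swp c a b y e \<noteq> a"
  proof (cases "e \<in> Kc c a b")
    case True
    then have "c e = a" using cb unfolding Kc_def by simp
    then show ?thesis using True assms(1,4) e unfolding swp_def by auto
  next
    case False
    then have "c e \<noteq> a" using e unfolding Kc_def by simp
    then show ?thesis using False unfolding swp_def by simp
  qed
qed

lemma swp_cases: "swp c a b y e = c e \<or> swp c a b y e = a \<or> swp c a b y e = b"
  unfolding swp_def by auto

lemma swp_noS: "\<not> (e \<in> Kc c a b \<and> (\<exists>z\<in>e. cn c a b y z)) \<Longrightarrow> swp c a b y e = c e"
  unfolding swp_def by (rule if_not_P)

lemma swp_S: "e \<in> Kc c a b \<and> (\<exists>z\<in>e. cn c a b y z) \<Longrightarrow> swp c a b y e = (if c e = a then b else a)"
  unfolding swp_def by (rule if_P)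

lemma miss_swp_other:
  assumes "g \<noteq> a" "g \<noteq> b" "g \<in> miss c z"
  shows "g \<in> miss (swp c a b y) z"
  unfolding miss_def
proof (intro CollectI conjI ballI impI)
  show "g < k" using assms(3) miss_lt by blast
  fix e assume e: "e \<in> M" "z \<in> e"
  show "swp c a b y e \<noteq> g" using swp_cases[of c a b y e] miss_edge[OF assms(3) e] assms(1,2) by auto
qed

lemma pc_swp:
  assumes "pc c" "a < k" "b < k"
  shows "pc (swp c a b y)"
  unfolding pc_def
proof (intro conjI ballI impI)
  fix e assume "e \<in> M" then show "swp c a b y e < k"
    using assms unfolding swp_def pc_def by auto
next
  fix e e' assume h: "e \<in> M" "e' \<in> M" "e \<noteq> e' \<and> e \<inter> e' \<noteq> {}"
  then obtain z where z: "z \<in> e" "z \<in> e'" by blast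
  have ne: "c e \<noteq> c e'" using assms(1) h unfolding pc_def by blast
  let ?S = "\<lambda>e. e \<in> Kc c a b \<and> (\<exists>z\<in>e. cn c a b y z)"
  show "swp c a b y e \<noteq> swp c a b y e'"
  proof (cases "?S e")
    case True
    then have zc: "cn c a b y z" using cn_edge z(1) by blast
    show ?thesis
    proof (cases "?S e'")
      case True
      have "c e = a \<or> c e = b" "c e' = a \<or> c e' = b" using \<open>?S e\<close> True unfolding Kc_def by auto
      then show ?thesis using swp_S[OF \<open>?S e\<close>] swp_S[OF True] ne by auto
    next
      case False
      then have "e' \<notin> Kc c a b" using zc z(2) by blast
      then have "c e' \<noteq> a" "c e' \<noteq> b" using h(2) unfolding Kc_def by auto
      then show ?thesis using swp_S[OF \<open>?S e\<close>] swp_noS[OF False] by auto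
    qed
  next
    case False
    note F = False
    show ?thesis
    proof (cases "?S e'")
      case True
      then have zc: "cn c a b y z" using cn_edge z(2) by blast
      then have "e \<notin> Kc c a b" using F z(1) by blast
      then have "c e \<noteq> a" "c e \<noteq> b" using h(1) unfolding Kc_def by auto
      then show ?thesis using swp_S[OF True] swp_noS[OF F] by auto
    next
      case False
      then show ?thesis using swp_noS[OF F] swp_noS[OF False] ne by simp
    qed
  qed
qed

lemma transfer_swap:
  assumes "pc c" "a \<in> miss c v" "a \<noteq> b" "\<not> cn c a b y v" "fp c P"
  shows "fp (swp c a b y) P \<or> (\<exists>P0. fp (swp c a b y) P0 \<and> b \<in> miss c (last P0) \<and> cn c a b y (last P0))"
  using assms(5)
proof (induction rule: fp.induct)
  case (root u) then show ?case by (simp add: fp.root)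
next
  case (step P x)
  show ?case
  proof (cases "fp (swp c a b y) P")
    case False
    then show ?thesis using step(5) by blast
  next
    case True
    have ex: "{v,x} \<in> M" by fact
    have sv: "swp c a b y {v,x} = c {v,x}" using swp_out[OF assms(4) ex] by simp
    have ga: "c {v,x} \<noteq> a" using miss_edge[OF assms(2) ex] by simp
    show ?thesis
    proof (cases "cn c a b y (last P)")
      case False
      then have "swp c a b y {v,x} \<in> miss (swp c a b y) (last P)"
        using sv miss_swp_out step(4) by simp
      then show ?thesis using fp.step[OF True ex step(3)] by blast
    next
      case cl: True
      show ?thesis
      proof (cases "c {v,x} = b")
        case True
        then show ?thesis using \<open>fp (swp c a b y) P\<close> step(4) cl by auto
      next
        case False
        then have "swp c a b y {v,x} \<in> miss (swp c a b y) (last P)"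
          using sv miss_swp_other[OF ga False step(4)] by simp
        then show ?thesis using fp.step[OF \<open>fp (swp c a b y) P\<close> ex step(3)] by blast
      qed
    qed
  qed
qed

lemma step_lemma:
  assumes "pc c" "a \<in> miss c v" "b \<in> miss c y" "a \<noteq> b" "fp c P" "last P = y" "\<not> cn c a b v y"
  shows False
proof -
  have nyv: "\<not> cn c a b y v" using assms(7) cn_sym by blast
  have ak: "a < k" "b < k" using assms(2,3) miss_lt by auto
  have pcs: "pc (swp c a b y)" using pc_swp[OF assms(1) ak] .
  have av: "a \<in> miss (swp c a b y) v" using miss_swp_out[OF nyv] assms(2) by simp
  from transfer_swap[OF assms(1,2,4) nyv assms(5)] show False
  proof
    assume f: "fp (swp c a b y) P"
    have "a \<in> miss (swp c a b y) (last P)"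
      using miss_swp_in[of c a b y y] assms(3,4,6) ak unfolding cn_def by simp
    then show False using shift[OF f pcs av] by simp
  next
    assume "\<exists>P0. fp (swp c a b y) P0 \<and> b \<in> miss c (last P0) \<and> cn c a b y (last P0)"
    then obtain P0 where p: "fp (swp c a b y) P0" "b \<in> miss c (last P0)" "cn c a b y (last P0)" by blast
    have "a \<in> miss (swp c a b y) (last P0)" using miss_swp_in[OF p(3) p(2) ak(1) assms(4)] .
    then show False using shift[OF p(1) pcs av] by simp
  qed
qed

lemma deg_K_le:
  assumes "pc c" "c ` {e\<in>Kc c a b. z\<in>e} \<subseteq> T" "finite T"
  shows "card {e\<in>Kc c a b. z\<in>e} \<le> card T"
proof (rule card_inj_on_le[OF _ assms(2,3)])
  show "inj_on c {e\<in>Kc c a b. z\<in>e}"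
  proof (rule inj_onI)
    fix e e' assume h: "e \<in> {e\<in>Kc c a b. z\<in>e}" "e' \<in> {e\<in>Kc c a b. z\<in>e}" "c e = c e'"
    show "e = e'"
    proof (rule ccontr)
      assume "e \<noteq> e'"
      moreover have "e \<in> M" "e' \<in> M" "e \<inter> e' \<noteq> {}" using h unfolding Kc_def by auto
      ultimately have "c e \<noteq> c e'" using assms(1) unfolding pc_def by blast
      then show False using h(3) by simp
    qed
  qed
qed

lemma elem:
  assumes pcc: "pc c" and av: "a \<in> miss c v" and fP: "fp c P" and fQ: "fp c Q"
    and ne: "last P \<noteq> last Q" and bP: "b \<in> miss c (last P)" and bQ: "b \<in> miss c (last Q)"
  shows False
proof (cases "b = a")
  case True
  then show False using shift[OF fP pcc av] bP by simp
next
  case False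
  have lP: "last P \<noteq> v" using fP fp_set_ne_v fp_ne by simp
  have lQ: "last Q \<noteq> v" using fQ fp_set_ne_v fp_ne by simp
  have "\<not> (cn c a b v (last P) \<and> cn c a b v (last Q))"
  proof
    assume cc: "cn c a b v (last P) \<and> cn c a b v (last Q)"
    show False
    proof (rule three_end[of "Kc c a b" v "last P" "last Q"])
      show "finite (Kc c a b)" using finM unfolding Kc_def by simp
      show "\<forall>e\<in>Kc c a b. card e = 2" using two unfolding Kc_def by simp
      show "\<forall>z. card {e\<in>Kc c a b. z\<in>e} \<le> 2"
      proof
        fix z
        have "card {e\<in>Kc c a b. z\<in>e} \<le> card {a,b}"
          by (rule deg_K_le[OF pcc]) (auto simp: Kc_def)
        also have "\<dots> \<le> 2" by (simp add: card_insert_le_m1)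
        finally show "card {e\<in>Kc c a b. z\<in>e} \<le> 2" .
      qed
      have "card {e\<in>Kc c a b. v\<in>e} \<le> card {b}"
        by (rule deg_K_le[OF pcc]) (auto simp: Kc_def dest: miss_edge[OF av])
      then show "card {e\<in>Kc c a b. v\<in>e} \<le> 1" by simp
      have "card {e\<in>Kc c a b. last P\<in>e} \<le> card {a}"
        by (rule deg_K_le[OF pcc]) (auto simp: Kc_def dest: miss_edge[OF bP])
      then show "card {e\<in>Kc c a b. last P\<in>e} \<le> 1" by simp
      have "card {e\<in>Kc c a b. last Q\<in>e} \<le> card {a}"
        by (rule deg_K_le[OF pcc]) (auto simp: Kc_def dest: miss_edge[OF bQ])
      then show "card {e\<in>Kc c a b. last Q\<in>e} \<le> 1" by simp
      show "v \<noteq> last P" using lP by simp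
      show "v \<noteq> last Q" using lQ by simp
      show "last P \<noteq> last Q" by fact
      show "(\<lambda>s t. {s,t} \<in> Kc c a b)\<^sup>*\<^sup>* v (last P)" using cc unfolding cn_def by simp
      show "(\<lambda>s t. {s,t} \<in> Kc c a b)\<^sup>*\<^sup>* v (last Q)" using cc unfolding cn_def by simp
    qed
  qed
  then have "\<not> cn c a b v (last P) \<or> \<not> cn c a b v (last Q)" by blast
  then show False
  proof
    assume "\<not> cn c a b v (last P)"
    then show False using step_lemma[OF pcc av bP] False fP by auto
  next
    assume "\<not> cn c a b v (last Q)"
    then show False using step_lemma[OF pcc av bQ] False fQ by auto
  qed
qed

lemma miss_nonempty:
  assumes "card {e\<in>M. x\<in>e} < k"
  shows "miss c x \<noteq> {}"
proof -
  have fin: "finite {e\<in>M. x\<in>e}" using finM by simp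
  have "card (c ` {e\<in>M. x\<in>e}) \<le> card {e\<in>M. x\<in>e}" using card_image_le[OF fin] .
  then have "card (c ` {e\<in>M. x\<in>e}) < card {..<k}" using assms by simp
  then have "\<not> {..<k} \<subseteq> c ` {e\<in>M. x\<in>e}"
  proof (intro notI)
    assume "{..<k} \<subseteq> c ` {e\<in>M. x\<in>e}"
    then have "card {..<k} \<le> card (c ` {e\<in>M. x\<in>e})" using card_mono[OF finite_imageI[OF fin]] by blast
    then show False using \<open>card (c ` {e\<in>M. x\<in>e}) < card {..<k}\<close> by linarith
  qed
  then obtain g where "g < k" "g \<notin> c ` {e\<in>M. x\<in>e}" by auto
  then have "g \<in> miss c x" unfolding miss_def by auto
  then show ?thesis by blast
qed

lemma count:
  assumes pcc: "pc c" and av: "a \<in> miss c v" and finR: "finite R"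
    and RF: "R \<subseteq> {x. card {e\<in>M. x\<in>e} < k}"
  shows "card R \<le> card ({w. {v,w} \<in> M} - {x. card {e\<in>M. x\<in>e} < k})"
proof -
  define W where "W = {w. {v,w} \<in> M}"
  define Fd where "Fd = {x. card {e\<in>M. x\<in>e} < k}"
  define S where "S = {z. \<exists>P. fp c P \<and> last P = z}"
  have finU: "finite (\<Union>M)" using finM two by (metis card.infinite finite_Union zero_neq_numeral)
  have finW: "finite W" unfolding W_def by (rule finite_subset[OF _ finU]) auto
  have RS: "R \<subseteq> S" unfolding S_def using fp.root by fastforce
  have SRW: "S - R \<subseteq> W"
  proof
    fix z assume "z \<in> S - R"
    then obtain P where P: "fp c P" "last P = z" "z \<notin> R" unfolding S_def by blast
    then have "z \<in> set P" using fp_ne by auto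
    then show "z \<in> W" using fp_set_sub[OF P(1)] P(3) unfolding W_def by blast
  qed
  have finS: "finite S" using finite_subset[of S "R \<union> W"] SRW finR finW by blast
  have RW: "R \<inter> W = {}" using Rbad unfolding W_def by blast
  define mu where "mu x = (SOME g. g \<in> miss c x)" for x
  define gw where "gw x = (SOME w. {v,w} \<in> M \<and> c {v,w} = mu x)" for x
  have key: "gw x \<in> S - R \<and> c {v, gw x} = mu x \<and> mu x \<in> miss c x" if x: "x \<in> S \<inter> Fd" for x
  proof -
    obtain P where P: "fp c P" "last P = x" using x unfolding S_def by blast
    have "miss c x \<noteq> {}" using miss_nonempty x unfolding Fd_def by blast
    then have mx: "mu x \<in> miss c x" unfolding mu_def by (meson ex_in_conv someI_ex)
    have "mu x \<notin> miss c v" using shift[OF P(1) pcc] mx P(2) by blast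
    moreover have "mu x < k" using mx miss_lt by blast
    ultimately obtain e where e: "e \<in> M" "v \<in> e" "c e = mu x" unfolding miss_def by blast
    have "card e = 2" using two e(1) by simp
    then obtain w where w: "w \<in> e" "w \<noteq> v" by (metis card_2_iff insertCI)
    have "e = {v,w}" using two_elems[OF e(1,2) w(1)] w(2) by simp
    then have ex: "\<exists>w. {v,w} \<in> M \<and> c {v,w} = mu x" using e by blast
    have gwp: "{v, gw x} \<in> M \<and> c {v, gw x} = mu x" unfolding gw_def using someI_ex[OF ex] .
    have "gw x \<in> S"
    proof (cases "gw x \<in> set P")
      case True
      then show ?thesis using fp_set[OF P(1)] unfolding S_def by blast
    next
      case False
      have "fp c (P @ [gw x])" using fp.step[OF P(1)] gwp False mx P(2) by simp
      then show ?thesis unfolding S_def by force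
    qed
    moreover have "gw x \<notin> R" using gwp Rbad by blast
    ultimately show ?thesis using gwp mx by blast
  qed
  have inj: "inj_on gw (S \<inter> Fd)"
  proof (rule inj_onI)
    fix x y assume h: "x \<in> S \<inter> Fd" "y \<in> S \<inter> Fd" "gw x = gw y"
    show "x = y"
    proof (rule ccontr)
      assume ne: "x \<noteq> y"
      obtain P where P: "fp c P" "last P = x" using h(1) unfolding S_def by blast
      obtain Q where Q: "fp c Q" "last Q = y" using h(2) unfolding S_def by blast
      have "mu x = mu y" using key[OF h(1)] key[OF h(2)] h(3) by simp
      then have "mu x \<in> miss c y" using key[OF h(2)] by simp
      moreover have "mu x \<in> miss c x" using key[OF h(1)] by simp
      moreover have "last P \<noteq> last Q" using ne P(2) Q(2) by simp
      ultimately show False using elem[OF pcc av P(1) Q(1)] P(2) Q(2) by blast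
    qed
  qed
  have le1: "card (S \<inter> Fd) \<le> card (S - R)"
    using card_inj_on_le[OF inj _ finite_Diff[OF finS]] key by blast
  have e1: "card (S \<inter> Fd) = card R + card ((S - R) \<inter> Fd)"
  proof -
    have "S \<inter> Fd = R \<union> ((S - R) \<inter> Fd)" using RS RF unfolding Fd_def by blast
    moreover have "R \<inter> ((S - R) \<inter> Fd) = {}" by blast
    moreover have "finite ((S - R) \<inter> Fd)" using finS by simp
    ultimately show ?thesis using finR card_Un_disjoint by metis
  qed
  have e2: "card (S - R) = card ((S - R) \<inter> Fd) + card ((S - R) - Fd)"
    using finS by (metis Diff_Diff_Int Int_commute card_Diff_subset_Int card_Int_Diff finite_Diff inf.cobounded1 finite_Int)
  have le2: "card ((S - R) - Fd) \<le> card (W - Fd)"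
    using SRW finW by (intro card_mono) auto
  show ?thesis using le1 e1 e2 le2 unfolding W_def Fd_def by linarith
qed

end


lemma card_star:
  assumes "\<forall>e\<in>X. card e = 2"
  shows "card {e\<in>X. v\<in>e} = card {w. {v,w} \<in> X}"
proof -
  have eq: "{e\<in>X. v\<in>e} = (\<lambda>w. {v,w}) ` {w. {v,w} \<in> X}"
  proof
    show "{e\<in>X. v\<in>e} \<subseteq> (\<lambda>w. {v,w}) ` {w. {v,w} \<in> X}"
    proof
      fix e assume e: "e \<in> {e\<in>X. v\<in>e}"
      then have "card e = 2" using assms by simp
      then obtain p q where pq: "e = {p,q}" "p \<noteq> q" by (meson card_2_iff)
      have "v \<in> e" using e by simp
      then have "\<exists>w. e = {v,w}" using pq by (cases "v = p") (auto simp: insert_commute)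
      then obtain w where "e = {v,w}" by blast
      then show "e \<in> (\<lambda>w. {v,w}) ` {w. {v,w} \<in> X}" using e by blast
    qed
  qed auto
  have inj: "inj_on (\<lambda>w. {v,w}) {w. {v,w} \<in> X}"
    by (rule inj_onI) (auto simp: doubleton_eq_iff)
  show ?thesis using eq card_image[OF inj] by simp
qed

theorem mainTheorem2:
  fixes V :: "'a set" and E M :: "'a set set" and k :: nat
  assumes "simple_graph V E"
    and "k \<ge> 1"
    and "maximal_edge_colorable k E M"
  shows "\<forall>v\<in>{u\<in>V. deg M u < k}. deg (induced_edges E {u\<in>V. deg M u < k}) v \<le> k - 1"
proof
  define F where "F = {u\<in>V. deg M u < k}"
  fix v assume vF0: "v \<in> {u\<in>V. deg M u < k}"
  then have vF: "v \<in> F" unfolding F_def by simp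
  have finV: "finite V" and Ep: "\<forall>e\<in>E. e \<subseteq> V \<and> card e = 2"
    using assms(1) unfolding simple_graph_def by auto
  have ME: "M \<subseteq> E" and col: "edge_colorable k M"
    and maxl: "\<And>M'. M \<subseteq> M' \<Longrightarrow> M' \<subseteq> E \<Longrightarrow> edge_colorable k M' \<Longrightarrow> M' = M"
    using assms(3) unfolding maximal_edge_colorable_def by auto
  have finE: "finite E"
  proof (rule finite_subset[of E "Pow V"])
    show "E \<subseteq> Pow V" using Ep by auto
  qed (use finV in simp)
  have finM: "finite M" using finite_subset[OF ME finE] .
  have two: "\<And>e. e \<in> M \<Longrightarrow> card e = 2" using ME Ep by auto
  define N where "N = {u. {v,u} \<in> E \<and> u \<in> F}"
  define W where "W = {w. {v,w} \<in> M}"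
  define R where "R = N - W"
  have Rbad: "\<And>u. u \<in> R \<Longrightarrow> {v,u} \<notin> M \<and> u \<noteq> v \<and> \<not> edge_colorable k (insert {v,u} M)"
  proof -
    fix u assume u: "u \<in> R"
    then have uE: "{v,u} \<in> E" and nM: "{v,u} \<notin> M" unfolding R_def N_def W_def by auto
    have "card {v,u} = 2" using Ep uE by blast
    then have uv: "u \<noteq> v" by (cases "u = v") auto
    have "\<not> edge_colorable k (insert {v,u} M)"
    proof
      assume "edge_colorable k (insert {v,u} M)"
      then have "insert {v,u} M = M" using maxl[of "insert {v,u} M"] ME uE by auto
      then show False using nM by auto
    qed
    then show "{v,u} \<notin> M \<and> u \<noteq> v \<and> \<not> edge_colorable k (insert {v,u} M)" using nM uv by simp
  qed
  interpret K: kc M k v R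
    using finM two Rbad by unfold_locales auto
  obtain c where pcc: "K.pc c" using col unfolding edge_colorable_def K.pc_def by blast
  have dv: "card {e\<in>M. v\<in>e} < k" using vF unfolding F_def deg_def by simp
  obtain a where av: "a \<in> K.miss c v" using K.miss_nonempty[OF dv] by blast
  have NV: "N \<subseteq> V" unfolding N_def F_def by auto
  have finN: "finite N" using finite_subset[OF NV finV] .
  have finR: "finite R" unfolding R_def using finN by simp
  define Fd where "Fd = {x. card {e\<in>M. x\<in>e} < k}"
  have FFd: "F \<subseteq> Fd" unfolding F_def Fd_def deg_def by auto
  have RF: "R \<subseteq> Fd" unfolding R_def N_def using FFd by auto
  have cR: "card R \<le> card (W - Fd)"
    using K.count[OF pcc av finR] RF unfolding W_def Fd_def by simp
  have finW: "finite W"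
  proof -
    have "W \<subseteq> V" unfolding W_def using ME Ep by blast
    then show ?thesis using finV finite_subset by blast
  qed
  have dM: "deg M v = card W" unfolding deg_def W_def using card_star[of M v] two by simp
  have dI: "deg (induced_edges E F) v = card N"
  proof -
    have "deg (induced_edges E F) v = card {w. {v,w} \<in> induced_edges E F}"
      unfolding deg_def using card_star[of "induced_edges E F" v] Ep unfolding induced_edges_def by simp
    moreover have "{w. {v,w} \<in> induced_edges E F} = N"
      unfolding induced_edges_def N_def using vF by auto
    ultimately show ?thesis by simp
  qed
  have c1: "card N = card (N \<inter> W) + card R"
  proof -
    have "N = (N \<inter> W) \<union> R" unfolding R_def by blast
    moreover have "(N \<inter> W) \<inter> R = {}" unfolding R_def by blast
    ultimately show ?thesis using finN finR card_Un_disjoint by (metis finite_Int)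
  qed
  have c2: "card (N \<inter> W) \<le> card (W \<inter> Fd)"
    using finW FFd unfolding N_def by (intro card_mono) auto
  have c3: "card W = card (W \<inter> Fd) + card (W - Fd)"
    using finW by (metis card_Int_Diff)
  have "card N \<le> card W" using c1 c2 c3 cR by linarith
  moreover have "card W < k" using dM vF unfolding F_def by simp
  ultimately show "deg (induced_edges E {u\<in>V. deg M u < k}) v \<le> k - 1"
    using dI unfolding F_def by simp
qed

end
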